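(* Let $G$ be a full, flexible group of homeomorphisms of the Cantor set $\{0,1\}^\omega$. Suppose that: (1) for all $g\in G$ both $(1,g)$ and $(g,1)$ lie in $G$, and every element of $G$ supported on $I_0$ or on $I_1$ has this form; (2) for all $g\in G$ there exists $h\in G$ with $h=(g,h)$; and (3) the homeomorphism $x_0$ lies in $G$. Then $G$ is simple.
   Context: $I_\alpha$ is the set of sequences beginning with the finite word $\alpha$. $G$ is full if every homeomorphism $h$ of $\{0,1\}^\omega$ that locally agrees with $G$ (each point has a neighborhood $U$ and some $g\in G$ with $h|_U=g|_U$) belongs to $G$. $G$ is flexible if for every pair $E_1,E_2$ of proper nonempty clopen subsets there is $g\in G$ with $g(E_1)\subseteq E_2$. For homeomorphisms $f,g$, $(f,g)$ is the homeomorphism with $(f,g)(0\zeta)=0f(\zeta)$, $(f,g)(1\zeta)=1g(\zeta)$; $1$ denotes the identity. An element is supported on $E$ if it is the identity off $E$. $x_0$ is the homeomorphism (first generator of Thompson's group $F$) with $x_0(00\zeta)=0\zeta$, $x_0(01\zeta)=10\zeta$, $x_0(1\zeta)=11\zeta$ for all $\zeta\in\{0,1\}^\omega$. *)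

theory Defs
  imports "HOL-Analysis.Analysis" "HOL-Algebra.Algebra"
begin

text \<open>Cantor space: infinite binary sequences, nat \<Rightarrow> bool (False = 0, True = 1),
  with the product topology (library instance on function spaces).\<close>

type_synonym cantor = "nat \<Rightarrow> bool"

definition is_homeo :: "(cantor \<Rightarrow> cantor) \<Rightarrow> bool" where
  "is_homeo h \<longleftrightarrow> (\<exists>k. homeomorphism UNIV UNIV h k)"

definition homeo_group :: "(cantor \<Rightarrow> cantor) set \<Rightarrow> bool" where
  "homeo_group S \<longleftrightarrow> (\<forall>g\<in>S. is_homeo g) \<and> id \<in> S \<and>
     (\<forall>f\<in>S. \<forall>g\<in>S. f \<circ> g \<in> S) \<and> (\<forall>g\<in>S. inv_into UNIV g \<in> S)"

definition homeo_grp :: "(cantor \<Rightarrow> cantor) set \<Rightarrow> (cantor \<Rightarrow> cantor) monoid" where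
  "homeo_grp S = \<lparr>carrier = S, mult = (\<circ>), one = id\<rparr>"

text \<open>Simplicity: nontrivial and no normal subgroups except the trivial one and the whole group.
  (The library locale simple_group uses the cardinality of the carrier, which is
   meaningless for infinite groups, so we spell it out.)\<close>
definition simple_grp :: "('a, 'b) monoid_scheme \<Rightarrow> bool" where
  "simple_grp H \<longleftrightarrow> group H \<and> carrier H \<noteq> {\<one>\<^bsub>H\<^esub>} \<and>
     (\<forall>N. N \<lhd> H \<longrightarrow> N = {\<one>\<^bsub>H\<^esub>} \<or> N = carrier H)"

definition clopen :: "cantor set \<Rightarrow> bool" where
  "clopen E \<longleftrightarrow> open E \<and> closed E"

definition full :: "(cantor \<Rightarrow> cantor) set \<Rightarrow> bool" where
  "full S \<longleftrightarrow> (\<forall>h. is_homeo h \<and>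
      (\<forall>x. \<exists>U. open U \<and> x \<in> U \<and> (\<exists>g\<in>S. \<forall>y\<in>U. h y = g y)) \<longrightarrow> h \<in> S)"

definition flexible :: "(cantor \<Rightarrow> cantor) set \<Rightarrow> bool" where
  "flexible S \<longleftrightarrow> (\<forall>E1 E2. clopen E1 \<and> E1 \<noteq> {} \<and> E1 \<noteq> UNIV \<and>
      clopen E2 \<and> E2 \<noteq> {} \<and> E2 \<noteq> UNIV \<longrightarrow> (\<exists>g\<in>S. g ` E1 \<subseteq> E2))"

definition ccons :: "bool \<Rightarrow> cantor \<Rightarrow> cantor" where
  "ccons b \<zeta> = case_nat b \<zeta>"

definition ctail :: "cantor \<Rightarrow> cantor" where
  "ctail \<xi> = (\<lambda>n. \<xi> (Suc n))"

definition pair_homeo :: "(cantor \<Rightarrow> cantor) \<Rightarrow> (cantor \<Rightarrow> cantor) \<Rightarrow> cantor \<Rightarrow> cantor" where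
  "pair_homeo f g \<xi> = (if \<xi> 0 then ccons True (g (ctail \<xi>)) else ccons False (f (ctail \<xi>)))"

definition supported_on :: "(cantor \<Rightarrow> cantor) \<Rightarrow> cantor set \<Rightarrow> bool" where
  "supported_on g E \<longleftrightarrow> (\<forall>x. x \<notin> E \<longrightarrow> g x = x)"

definition I0 :: "cantor set" where "I0 = {\<xi>. \<xi> 0 = False}"
definition I1 :: "cantor set" where "I1 = {\<xi>. \<xi> 0 = True}"

text \<open>x0(00\<zeta>) = 0\<zeta>, x0(01\<zeta>) = 10\<zeta>, x0(1\<zeta>) = 11\<zeta>.\<close>
definition x0 :: "cantor \<Rightarrow> cantor" where
  "x0 \<xi> = (if \<not> \<xi> 0 then
              (if \<not> \<xi> 1 then ccons False (ctail (ctail \<xi>))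
               else ccons True (ccons False (ctail (ctail \<xi>))))
            else ccons True (ccons True (ctail \<xi>)))"

end

theory Submission
  imports Defs
begin


abbreviation hinv :: "(cantor \<Rightarrow> cantor) \<Rightarrow> cantor \<Rightarrow> cantor" where "hinv f \<equiv> inv_into UNIV f"

lemma ccons_0[simp]: "ccons b z 0 = b" by (simp add: ccons_def)
lemma ccons_Suc[simp]: "ccons b z (Suc n) = z n" by (simp add: ccons_def)
lemma ctail_ccons[simp]: "ctail (ccons b z) = z" by (simp add: ctail_def ccons_def)
lemma ccons_ctail: "ccons (x 0) (ctail x) = x"
  by (rule ext, simp add: ccons_def ctail_def split: nat.split)
lemma ccons_eq_iff[simp]: "ccons a x = ccons b y \<longleftrightarrow> a = b \<and> x = y"
proof
  assume e: "ccons a x = ccons b y"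
  have "a = b" using arg_cong[OF e, of "\<lambda>s. s 0"] by simp
  moreover have "x = y" using arg_cong[OF e, of ctail] by simp
  ultimately show "a = b \<and> x = y" by simp
qed simp
lemma ctail_apply[simp]: "ctail x n = x (Suc n)" by (simp add: ctail_def)

lemma homeo_props:
  assumes "is_homeo h"
  shows "bij h" "continuous_on UNIV h" "continuous_on UNIV (hinv h)"
proof -
  obtain k where k: "homeomorphism UNIV UNIV h k" using assms is_homeo_def by blast
  hence hk: "\<And>x. k (h x) = x" "\<And>y. h (k y) = y" and c: "continuous_on UNIV h" "continuous_on UNIV k"
    by (auto simp: homeomorphism_def)
  have "bij h" by (metis bijI' hk)
  moreover have "hinv h = k" by (rule ext, metis hk inv_f_eq bij_is_inj \<open>bij h\<close>)
  ultimately show "bij h" "continuous_on UNIV h" "continuous_on UNIV (hinv h)" using c by simp_all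
qed

lemma clopen_coord: "clopen {y::cantor. y i = b}"
proof -
  have o: "open {y::cantor. y i = c}" for c
  proof -
    have "{y::cantor. y i = c} = (\<lambda>y. y i) -` {c}" by auto
    thus ?thesis by (metis open_vimage open_discrete continuous_on_product_coordinates)
  qed
  have "{y::cantor. y i = b} = - {y. y i = (\<not> b)}" by auto
  thus ?thesis using o unfolding clopen_def closed_def by (metis double_compl)
qed

lemma clopen_Int: "clopen A \<Longrightarrow> clopen B \<Longrightarrow> clopen (A \<inter> B)"
  by (simp add: clopen_def open_Int closed_Int)
lemma clopen_Un: "clopen A \<Longrightarrow> clopen B \<Longrightarrow> clopen (A \<union> B)"
  by (simp add: clopen_def open_Un closed_Un)
lemma clopen_Compl: "clopen A \<Longrightarrow> clopen (- A)"
  by (simp add: clopen_def open_Compl closed_Compl)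
lemma clopen_vimage: "continuous_on UNIV f \<Longrightarrow> clopen A \<Longrightarrow> clopen (f -` A)"
proof -
  assume c: "continuous_on UNIV f" and A: "clopen A"
  have "open (f -` A)" using A c open_vimage clopen_def by blast
  moreover have "open (f -` (- A))" using A c open_vimage clopen_def open_Compl by blast
  moreover have "f -` (- A) = - (f -` A)" by auto
  ultimately show ?thesis unfolding clopen_def closed_def by simp
qed

lemma supp_mono: "supported_on f A \<Longrightarrow> A \<subseteq> B \<Longrightarrow> supported_on f B"
  unfolding supported_on_def by blast

lemma supp_conj:
  fixes g f :: "cantor \<Rightarrow> cantor"
  assumes "bij g" "supported_on f F"
  shows "supported_on (g \<circ> f \<circ> hinv g) (g ` F)"
  unfolding supported_on_def
proof (intro allI impI)
  fix y assume "y \<notin> g ` F"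
  have "g (hinv g y) = y" using assms(1) by (simp add: bij_is_surj surj_f_inv_f)
  hence "hinv g y \<notin> F" using \<open>y \<notin> g ` F\<close> by (metis image_eqI)
  hence "f (hinv g y) = hinv g y" using assms(2) supported_on_def by blast
  thus "(g \<circ> f \<circ> hinv g) y = y" using \<open>g (hinv g y) = y\<close> by simp
qed

lemma supp_maps:
  assumes "inj b" "supported_on b E" "x \<in> E" shows "b x \<in> E"
proof (rule ccontr)
  assume "b x \<notin> E"
  hence "b (b x) = b x" using assms(2) supported_on_def by blast
  hence "b x = x" using assms(1) by (simp add: inj_eq)
  thus False using \<open>b x \<notin> E\<close> assms(3) by simp
qed

lemma supp_commute:
  assumes "inj b" "supported_on b E" "inj d" "supported_on d D" "E \<inter> D = {}"
  shows "b \<circ> d = d \<circ> b"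
proof (rule ext)
  fix x
  show "(b \<circ> d) x = (d \<circ> b) x"
  proof (cases "x \<in> E")
    case True
    hence "b x \<in> E" using supp_maps assms by blast
    hence "b x \<notin> D" using assms(5) by blast
    hence "d (b x) = b x" using assms(4) unfolding supported_on_def by simp
    moreover have "x \<notin> D" using True assms(5) by blast
    hence "d x = x" using assms(4) unfolding supported_on_def by simp
    ultimately show ?thesis by simp
  next
    case False
    hence bx: "b x = x" using assms supported_on_def by blast
    show ?thesis
    proof (cases "x \<in> D")
      case True
      hence "d x \<in> D" using supp_maps assms by blast
      hence "d x \<notin> E" using assms(5) by blast
      thus ?thesis using bx assms(2) supported_on_def by auto
    next
      case False
      thus ?thesis using bx assms(4) supported_on_def by auto
    qed
  qed
qed

lemma supp_inv:
  assumes "bij f" "supported_on f E" shows "supported_on (hinv f) E"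
  unfolding supported_on_def
proof (intro allI impI)
  fix x assume "x \<notin> E"
  hence "f x = x" using assms supported_on_def by blast
  thus "hinv f x = x" using assms(1) by (metis bij_inv_eq_iff)
qed



lemma bh1: "bij (f::cantor \<Rightarrow> cantor) \<Longrightarrow> hinv f (f x) = x"
  by (simp add: bij_is_inj inv_f_f)
lemma bh2: "bij (f::cantor \<Rightarrow> cantor) \<Longrightarrow> f (hinv f x) = x"
  by (simp add: bij_is_surj surj_f_inv_f)

lemma conj_inv:
  fixes g a :: "cantor \<Rightarrow> cantor"
  assumes "bij g" "bij a"
  shows "hinv (g \<circ> a \<circ> hinv g) = g \<circ> hinv a \<circ> hinv g"
proof (rule inv_unique_comp)
  show "(g \<circ> a \<circ> hinv g) \<circ> (g \<circ> hinv a \<circ> hinv g) = id"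
    using assms by (intro ext) (simp add: bh1 bh2)
  show "(g \<circ> hinv a \<circ> hinv g) \<circ> (g \<circ> a \<circ> hinv g) = id"
    using assms by (intro ext) (simp add: bh1 bh2)
qed

locale hg =
  fixes S :: "(cantor \<Rightarrow> cantor) set"
  assumes grp: "homeo_group S" and fullS: "full S" and flexS: "flexible S"
    and pairs: "\<forall>g\<in>S. pair_homeo id g \<in> S \<and> pair_homeo g id \<in> S"
    and sup0: "\<forall>f\<in>S. supported_on f I0 \<longrightarrow> (\<exists>g\<in>S. f = pair_homeo g id)"
    and sup1: "\<forall>f\<in>S. supported_on f I1 \<longrightarrow> (\<exists>g\<in>S. f = pair_homeo id g)"
    and recS: "\<forall>g\<in>S. \<exists>h\<in>S. h = pair_homeo g h"
    and x0S: "x0 \<in> S"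
begin

lemma S_homeo: "g \<in> S \<Longrightarrow> is_homeo g" using grp unfolding homeo_group_def by blast
lemma S_id: "id \<in> S" using grp unfolding homeo_group_def by blast
lemma S_comp: "f \<in> S \<Longrightarrow> g \<in> S \<Longrightarrow> f \<circ> g \<in> S" using grp unfolding homeo_group_def by blast
lemma S_inv: "g \<in> S \<Longrightarrow> hinv g \<in> S" using grp unfolding homeo_group_def by blast
lemma S_bij: "g \<in> S \<Longrightarrow> bij g" by (rule homeo_props(1)[OF S_homeo])
lemma S_cont: "g \<in> S \<Longrightarrow> continuous_on UNIV g" by (rule homeo_props(2)[OF S_homeo])
lemma S_icont: "g \<in> S \<Longrightarrow> continuous_on UNIV (hinv g)" by (rule homeo_props(3)[OF S_homeo])

lemma flex: "clopen E1 \<Longrightarrow> E1 \<noteq> {} \<Longrightarrow> E1 \<noteq> UNIV \<Longrightarrow> clopen E2 \<Longrightarrow> E2 \<noteq> {} \<Longrightarrow> E2 \<noteq> UNIV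
  \<Longrightarrow> \<exists>g\<in>S. g ` E1 \<subseteq> E2"
  using flexS unfolding flexible_def by blast

lemma S_conj: "g \<in> S \<Longrightarrow> a \<in> S \<Longrightarrow> g \<circ> a \<circ> hinv g \<in> S"
  by (intro S_comp S_inv)

end

locale hgN = hg +
  fixes N n0
  assumes NS: "N \<subseteq> S" and N_id: "id \<in> N"
    and N_comp: "a \<in> N \<Longrightarrow> b \<in> N \<Longrightarrow> a \<circ> b \<in> N"
    and N_inv: "a \<in> N \<Longrightarrow> hinv a \<in> N"
    and N_conj: "g \<in> S \<Longrightarrow> a \<in> N \<Longrightarrow> g \<circ> a \<circ> hinv g \<in> N"
    and n0N: "n0 \<in> N" and n0id: "n0 \<noteq> id"
begin

lemma obtE: obtains E where "clopen E" "E \<noteq> {}" "E \<noteq> UNIV" "n0 ` E \<inter> E = {}"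
proof -
  obtain x where x: "n0 x \<noteq> x" using n0id by (auto simp: fun_eq_iff)
  then obtain i where i: "n0 x i \<noteq> x i" by (auto simp: fun_eq_iff)
  define E where "E = {y. y i = x i} \<inter> n0 -` {y. y i = n0 x i}"
  have n0S: "n0 \<in> S" using n0N NS by blast
  have c: "continuous_on UNIV n0" by (rule S_cont[OF n0S])
  have "clopen E" unfolding E_def
    by (intro clopen_Int clopen_coord clopen_vimage c)
  moreover have "x \<in> E" unfolding E_def by simp
  moreover have "n0 x \<notin> E" unfolding E_def using i by simp
  moreover have "n0 ` E \<inter> E = {}" unfolding E_def using i by auto
  ultimately show ?thesis using that by (metis empty_iff UNIV_I)
qed

lemma comm_E:
  assumes E: "n0 ` E \<inter> E = {}" and a: "a \<in> S" "supported_on a E" and b: "b \<in> S" "supported_on b E"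
  shows "a \<circ> b \<circ> hinv a \<circ> hinv b \<in> N"
proof -
  have n0S: "n0 \<in> S" using n0N NS by blast
  define d where "d = n0 \<circ> hinv a \<circ> hinv n0"
  have bija: "bij a" by (rule S_bij[OF a(1)])
  have bijb: "bij b" by (rule S_bij[OF b(1)])
  have bijn: "bij n0" by (rule S_bij[OF n0S])
  have dS: "d \<in> S" unfolding d_def by (rule S_conj[OF n0S S_inv[OF a(1)]])
  have bijd: "bij d" by (rule S_bij[OF dS])
  have "supported_on d (n0 ` E)" unfolding d_def
    by (rule supp_conj[OF bijn supp_inv[OF bija a(2)]])
  hence sd: "supported_on (hinv d) (n0 ` E)" by (rule supp_inv[OF bijd])
  have com: "b \<circ> hinv d = hinv d \<circ> b"
    by (rule supp_commute[OF bij_is_inj[OF bijb] b(2) bij_is_inj[OF bij_imp_bij_inv[OF bijd]] sd])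
       (use E in blast)
  hence com': "\<And>z. b (hinv d z) = hinv d (b z)" by (simp add: fun_eq_iff)
  have dd: "\<And>z. d (hinv d z) = z" using bijd by (simp add: bij_is_surj surj_f_inv_f)
  define c where "c = a \<circ> d"
  have "a \<circ> n0 \<circ> hinv a \<in> N" by (rule N_conj[OF a(1) n0N])
  moreover have "c = (a \<circ> n0 \<circ> hinv a) \<circ> hinv n0" unfolding c_def d_def by (simp add: comp_assoc)
  ultimately have cN: "c \<in> N" using N_comp[OF _ N_inv[OF n0N]] by simp
  have "b \<circ> hinv c \<circ> hinv b \<in> N" by (rule N_conj[OF b(1) N_inv[OF cN]])
  hence "c \<circ> (b \<circ> hinv c \<circ> hinv b) \<in> N" by (rule N_comp[OF cN])
  moreover have "c \<circ> (b \<circ> hinv c \<circ> hinv b) = a \<circ> b \<circ> hinv a \<circ> hinv b"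
  proof -
    have hc: "hinv (a \<circ> d) = hinv d \<circ> hinv a" by (rule o_inv_distrib[OF bija bijd])
    show ?thesis unfolding c_def hc by (intro ext) (simp add: com' dd)
  qed
  ultimately show ?thesis by simp
qed

lemma comm_F:
  assumes F: "clopen F" "F \<noteq> {}" "F \<noteq> UNIV" and a: "a \<in> S" "supported_on a F"
    and b: "b \<in> S" "supported_on b F"
  shows "a \<circ> b \<circ> hinv a \<circ> hinv b \<in> N"
proof -
  obtain E where E: "clopen E" "E \<noteq> {}" "E \<noteq> UNIV" "n0 ` E \<inter> E = {}" by (rule obtE)
  obtain g where g: "g \<in> S" "g ` F \<subseteq> E" using flex[OF F E(1-3)] by blast
  have bg: "bij g" and ba: "bij a" and bb: "bij b" using g a b S_bij by auto
  define a' where "a' = g \<circ> a \<circ> hinv g"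
  define b' where "b' = g \<circ> b \<circ> hinv g"
  have aS: "a' \<in> S" unfolding a'_def by (rule S_conj[OF g(1) a(1)])
  have bS: "b' \<in> S" unfolding b'_def by (rule S_conj[OF g(1) b(1)])
  have sa: "supported_on a' E" unfolding a'_def by (rule supp_mono[OF supp_conj[OF bg a(2)] g(2)])
  have sb: "supported_on b' E" unfolding b'_def by (rule supp_mono[OF supp_conj[OF bg b(2)] g(2)])
  have "a' \<circ> b' \<circ> hinv a' \<circ> hinv b' \<in> N" by (rule comm_E[OF E(4) aS sa bS sb])
  hence "hinv g \<circ> (a' \<circ> b' \<circ> hinv a' \<circ> hinv b') \<circ> hinv (hinv g) \<in> N"
    by (rule N_conj[OF S_inv[OF g(1)]])
  moreover have "hinv g \<circ> (a' \<circ> b' \<circ> hinv a' \<circ> hinv b') \<circ> hinv (hinv g) = a \<circ> b \<circ> hinv a \<circ> hinv b"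
    unfolding a'_def b'_def conj_inv[OF bg ba] conj_inv[OF bg bb] inv_inv_eq[OF bg]
    using bg by (intro ext) (simp add: bh1 bh2)
  ultimately show ?thesis by simp
qed

end


lemma pair_F[simp]: "pair_homeo f g (ccons False z) = ccons False (f z)"
  by (simp add: pair_homeo_def)
lemma pair_T[simp]: "pair_homeo f g (ccons True z) = ccons True (g z)"
  by (simp add: pair_homeo_def)

lemma x0_FF[simp]: "x0 (ccons False (ccons False z)) = ccons False z" by (simp add: x0_def)
lemma x0_FT[simp]: "x0 (ccons False (ccons True z)) = ccons True (ccons False z)" by (simp add: x0_def)
lemma x0_T[simp]: "x0 (ccons True z) = ccons True (ccons True z)" by (simp add: x0_def)

definition x0i :: "cantor \<Rightarrow> cantor" where
  "x0i \<xi> = (if \<not> \<xi> 0 then ccons False (ccons False (ctail \<xi>))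
     else if \<not> \<xi> 1 then ccons False (ccons True (ctail (ctail \<xi>)))
     else ccons True (ctail (ctail \<xi>)))"

lemma x0i_F[simp]: "x0i (ccons False z) = ccons False (ccons False z)" by (simp add: x0i_def)
lemma x0i_TF[simp]: "x0i (ccons True (ccons False z)) = ccons False (ccons True z)" by (simp add: x0i_def)
lemma x0i_TT[simp]: "x0i (ccons True (ccons True z)) = ccons True z" by (simp add: x0i_def)

lemma split3:
  assumes "\<And>a b c z. P (ccons a (ccons b (ccons c z)))"
  shows "P \<xi>"
proof -
  have "\<xi> = ccons (\<xi> 0) (ccons (\<xi> (Suc 0)) (ccons (\<xi> (Suc (Suc 0))) (ctail (ctail (ctail \<xi>)))))"
    by (rule ext) (simp add: ccons_def split: nat.split)
  thus ?thesis using assms by metis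
qed

lemma x0_x0i: "x0 \<circ> x0i = id"
proof (rule ext)
  fix \<xi> show "(x0 \<circ> x0i) \<xi> = id \<xi>"
    by (rule split3[of "\<lambda>\<xi>. (x0 \<circ> x0i) \<xi> = id \<xi>"], simp only: comp_apply id_apply)
       (case_tac a; case_tac b; simp)
qed

lemma x0i_x0: "x0i \<circ> x0 = id"
proof (rule ext)
  fix \<xi> show "(x0i \<circ> x0) \<xi> = id \<xi>"
    by (rule split3[of "\<lambda>\<xi>. (x0i \<circ> x0) \<xi> = id \<xi>"], simp only: comp_apply id_apply)
       (case_tac a; case_tac b; simp)
qed

lemma local_cont:
  fixes t :: "cantor \<Rightarrow> cantor"
  assumes "\<And>x. \<exists>U. open U \<and> x \<in> U \<and> (\<exists>g. continuous_on UNIV g \<and> (\<forall>y\<in>U. t y = g y))"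
  shows "continuous_on UNIV t"
proof -
  have *: "open (t -` B)" if B: "open B" for B
  proof (subst open_subopen, intro ballI)
    fix x assume x: "x \<in> t -` B"
    obtain U g where U: "open U" "x \<in> U" "continuous_on UNIV g" "\<forall>y\<in>U. t y = g y"
      using assms by blast
    have "open (U \<inter> g -` B)" using U(1,3) B open_vimage by blast
    moreover have "x \<in> U \<inter> g -` B" using U x by auto
    moreover have "U \<inter> g -` B \<subseteq> t -` B" using U by auto
    ultimately show "\<exists>T. open T \<and> x \<in> T \<and> T \<subseteq> t -` B" by blast
  qed
  show ?thesis by (subst continuous_on_open_vimage[OF open_UNIV]) (simp add: *)
qed

context hg
begin

lemma x0i_S: "x0i \<in> S"
proof -
  have "hinv x0 = x0i" by (rule inv_unique_comp[OF x0_x0i x0i_x0])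
  thus ?thesis using S_inv[OF x0S] by simp
qed

definition y0 :: "cantor \<Rightarrow> cantor" where "y0 = x0 \<circ> pair_homeo x0i id"

lemma y0_S: "y0 \<in> S"
  unfolding y0_def using S_comp[OF x0S] pairs x0i_S by blast

lemma invol_S:
  assumes tt: "\<And>x. t (t x) = x"
    and loc: "\<And>x. \<exists>U. open U \<and> x \<in> U \<and> (\<exists>g\<in>S. \<forall>y\<in>U. t y = g y)"
  shows "t \<in> S"
proof -
  have c: "continuous_on UNIV t"
  proof (rule local_cont)
    fix x
    obtain U g where "open U" "x \<in> U" "g \<in> S" "\<forall>y\<in>U. t y = g y" using loc by blast
    thus "\<exists>U. open U \<and> x \<in> U \<and> (\<exists>g. continuous_on UNIV g \<and> (\<forall>y\<in>U. t y = g y))"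
      using S_cont by blast
  qed
  have "t ` UNIV = UNIV" by (metis tt surjI)
  hence "homeomorphism UNIV UNIV t t" unfolding homeomorphism_def using tt c by simp
  hence "is_homeo t" unfolding is_homeo_def by blast
  thus ?thesis using fullS loc unfolding full_def by blast
qed

end

context hgN
begin

lemma step_c:
  assumes g: "g \<in> S"
  shows "pair_homeo id (pair_homeo g id) \<in> N"
proof -
  obtain h where h: "h \<in> S" "h = pair_homeo g h" using recS g by blast
  have hF: "h (ccons False z) = ccons False (g z)" for z using h(2) by (metis pair_F)
  have hT: "h (ccons True z) = ccons True (h z)" for z using h(2) by (metis pair_T)
  define k where "k = pair_homeo id h"
  define P where "P = pair_homeo id (pair_homeo g id)"
  have kS: "k \<in> S" unfolding k_def using pairs h(1) by blast
  define F where "F = {\<xi>::cantor. \<xi> 0 = True} \<union> {\<xi>. \<xi> 1 = True}"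
  have Fc: "clopen F" unfolding F_def by (intro clopen_Un clopen_coord)
  have Fne: "F \<noteq> {}" unfolding F_def by auto
  have FU: "F \<noteq> UNIV" unfolding F_def by (auto simp: set_eq_iff intro!: exI[of _ "\<lambda>_. False"])
  have sk: "supported_on k F"
    unfolding supported_on_def
  proof (intro allI impI)
    fix \<xi> :: cantor assume "\<xi> \<notin> F"
    have "\<xi> \<notin> F \<longrightarrow> k \<xi> = \<xi>" unfolding k_def F_def
      by (rule split3[of "\<lambda>\<xi>. \<xi> \<notin> _ \<longrightarrow> pair_homeo id h \<xi> = \<xi>"])
         (case_tac a; case_tac b; simp)
    thus "k \<xi> = \<xi>" using \<open>\<xi> \<notin> F\<close> by blast
  qed
  have sy: "supported_on y0 F"
    unfolding supported_on_def
  proof (intro allI impI)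
    fix \<xi> :: cantor assume "\<xi> \<notin> F"
    have "\<xi> \<notin> F \<longrightarrow> y0 \<xi> = \<xi>" unfolding y0_def F_def
      by (rule split3[of "\<lambda>\<xi>. \<xi> \<notin> _ \<longrightarrow> (x0 \<circ> pair_homeo x0i id) \<xi> = \<xi>"])
         (case_tac a; case_tac b; simp)
    thus "y0 \<xi> = \<xi>" using \<open>\<xi> \<notin> F\<close> by blast
  qed
  have key: "P (y0 (k \<xi>)) = k (y0 \<xi>)" for \<xi>
  proof (rule split3[where P="\<lambda>\<xi>. P (y0 (k \<xi>)) = k (y0 \<xi>)"])
    fix a b c z
    show "P (y0 (k (ccons a (ccons b (ccons c z))))) = k (y0 (ccons a (ccons b (ccons c z))))"
      unfolding P_def k_def y0_def by (cases a; cases b; cases c; simp add: hF hT)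
  qed
  have bk: "bij k" by (rule S_bij[OF kS])
  have by0: "bij y0" by (rule S_bij[OF y0_S])
  have "P = k \<circ> y0 \<circ> hinv k \<circ> hinv y0"
  proof (rule ext)
    fix z
    have "P z = P (y0 (k (hinv k (hinv y0 z))))" using bk by0 by (simp add: bh2)
    also have "\<dots> = k (y0 (hinv k (hinv y0 z)))" by (rule key)
    finally show "P z = (k \<circ> y0 \<circ> hinv k \<circ> hinv y0) z" by simp
  qed
  moreover have "k \<circ> y0 \<circ> hinv k \<circ> hinv y0 \<in> N"
    by (rule comm_F[OF Fc Fne FU kS sk y0_S sy])
  ultimately show ?thesis unfolding P_def by simp
qed

end


context hgN
begin

definition I10 :: "cantor set" where "I10 = {\<xi>. \<xi> 0 = True} \<inter> {\<xi>. \<xi> 1 = False}"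

lemma step_d:
  assumes f: "f \<in> S" "supported_on f I10"
  shows "f \<in> N"
proof -
  have "supported_on f I1" using f(2) unfolding supported_on_def I10_def I1_def by auto
  then obtain g' where g': "g' \<in> S" "f = pair_homeo id g'" using sup1 f(1) by blast
  have "supported_on g' I0" unfolding supported_on_def
  proof (intro allI impI)
    fix \<zeta> :: cantor assume "\<zeta> \<notin> I0"
    hence "ccons True \<zeta> \<notin> I10" unfolding I0_def I10_def by simp
    hence "f (ccons True \<zeta>) = ccons True \<zeta>" using f(2) unfolding supported_on_def by blast
    thus "g' \<zeta> = \<zeta>" using g'(2) by simp
  qed
  then obtain g where g: "g \<in> S" "g' = pair_homeo g id" using sup0 g'(1) by blast
  show ?thesis using step_c[OF g(1)] g g' by simp
qed

lemma step_e:
  assumes f: "f \<in> S" "supported_on f F" and F: "clopen F" "F \<noteq> UNIV"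
  shows "f \<in> N"
proof (cases "F = {}")
  case True
  hence "f = id" using f(2) unfolding supported_on_def by auto
  thus ?thesis using N_id by simp
next
  case False
  have c: "clopen I10" unfolding I10_def by (intro clopen_Int clopen_coord)
  have ne: "I10 \<noteq> {}" unfolding I10_def
    using exI[of "\<lambda>\<xi>::cantor. \<xi> 0 = True \<and> \<xi> 1 = False" "ccons True (ccons False (\<lambda>_. False))"]
    by auto
  have nu: "I10 \<noteq> UNIV" unfolding I10_def by (auto simp: set_eq_iff intro!: exI[of _ "\<lambda>_. False"])
  obtain g where g: "g \<in> S" "g ` F \<subseteq> I10" using flex[OF F(1) False F(2) c ne nu] by blast
  have bg: "bij g" by (rule S_bij[OF g(1)])
  have "g \<circ> f \<circ> hinv g \<in> N"
    by (rule step_d[OF S_conj[OF g(1) f(1)] supp_mono[OF supp_conj[OF bg f(2)] g(2)]])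
  hence "hinv g \<circ> (g \<circ> f \<circ> hinv g) \<circ> hinv (hinv g) \<in> N" by (rule N_conj[OF S_inv[OF g(1)]])
  moreover have "hinv g \<circ> (g \<circ> f \<circ> hinv g) \<circ> hinv (hinv g) = f"
    unfolding inv_inv_eq[OF bg] using bg by (intro ext) (simp add: bh1 bh2)
  ultimately show ?thesis by simp
qed

lemma step_f:
  assumes fS: "f \<in> S"
  shows "f \<in> N"
proof (cases "f = id")
  case True
  thus ?thesis using N_id by simp
next
  case False
  obtain x where x: "f x \<noteq> x" using False by (auto simp: fun_eq_iff)
  then obtain i where i: "f x i \<noteq> x i" by (auto simp: fun_eq_iff)
  define j where "j = Suc i"
  have bf: "bij f" by (rule S_bij[OF fS])
  have cf: "continuous_on UNIV f" by (rule S_cont[OF fS])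
  have cfi: "continuous_on UNIV (hinv f)" by (rule S_icont[OF fS])
  define A where "A = {y. y i = x i} \<inter> {y. y j = x j} \<inter> f -` {y. y i = f x i} \<inter> f -` {y. y j = f x j}"
  define B where "B = f ` A"
  have Ac: "clopen A" unfolding A_def
    by (intro clopen_Int clopen_coord clopen_vimage cf)
  have xA: "x \<in> A" unfolding A_def by simp
  have Bv: "B = hinv f -` A"
  proof
    show "B \<subseteq> hinv f -` A" unfolding B_def using bf by (auto simp: bh1)
    show "hinv f -` A \<subseteq> B" unfolding B_def using bf by (auto simp: bh2 intro!: image_eqI[where x="hinv f _"])
  qed
  have Bc: "clopen B" unfolding Bv by (rule clopen_vimage[OF cfi Ac])
  have Bi: "y \<in> B \<Longrightarrow> y i = f x i" for y unfolding B_def A_def by auto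
  have AB: "A \<inter> B = {}" using Bi i unfolding A_def by auto
  define t where "t y = (if y \<in> A then f y else if y \<in> B then hinv f y else y)" for y
  have fA: "y \<in> A \<Longrightarrow> f y \<in> B" for y unfolding B_def by auto
  have iB: "y \<in> B \<Longrightarrow> hinv f y \<in> A" for y unfolding Bv by auto
  have tt: "t (t y) = y" for y
  proof -
    consider "y \<in> A" | "y \<in> B" | "y \<notin> A" "y \<notin> B" by blast
    thus ?thesis
    proof cases
      case 1
      hence "f y \<in> B" "f y \<notin> A" using fA AB by auto
      thus ?thesis using 1 bf by (simp add: t_def bh1)
    next
      case 2
      hence "y \<notin> A" "hinv f y \<in> A" using iB AB by auto
      thus ?thesis using 2 bf by (simp add: t_def bh2)
    next
      case 3
      thus ?thesis by (simp add: t_def)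
    qed
  qed
  have loc: "\<exists>U. open U \<and> z \<in> U \<and> (\<exists>g\<in>S. \<forall>y\<in>U. t y = g y)" for z
  proof -
    consider "z \<in> A" | "z \<in> B" | "z \<in> - (A \<union> B)" by blast
    thus ?thesis
    proof cases
      case 1
      thus ?thesis using Ac fS unfolding clopen_def t_def by (intro exI[of _ A]) auto
    next
      case 2
      have "\<forall>y\<in>B. t y = hinv f y" using AB unfolding t_def by auto
      thus ?thesis using 2 Bc S_inv[OF fS] unfolding clopen_def by blast
    next
      case 3
      have "open (- (A \<union> B))" using Ac Bc clopen_Un clopen_Compl clopen_def by blast
      moreover have "\<forall>y\<in>- (A \<union> B). t y = id y" unfolding t_def by auto
      ultimately show ?thesis using 3 S_id by blast
    qed
  qed
  have tS: "t \<in> S" by (rule invol_S[OF tt loc])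
  have "supported_on t (A \<union> B)" unfolding supported_on_def t_def by auto
  moreover have "clopen (A \<union> B)" by (rule clopen_Un[OF Ac Bc])
  moreover have "A \<union> B \<noteq> UNIV"
  proof -
    define z where "z = x(j := \<not> x j)"
    have "z \<notin> A" unfolding z_def A_def by simp
    moreover have "z i = x i" unfolding z_def j_def by simp
    hence "z \<notin> B" using Bi i by metis
    ultimately show ?thesis by blast
  qed
  ultimately have tN: "t \<in> N" using step_e tS by blast
  have "supported_on (t \<circ> f) (- A)" unfolding supported_on_def
  proof (intro allI impI)
    fix y assume "y \<notin> - A"
    hence "y \<in> A" by simp
    hence "f y \<in> B" "f y \<notin> A" using fA AB by auto
    thus "(t \<circ> f) y = y" using bf by (simp add: t_def bh1)
  qed
  moreover have "clopen (- A)" by (rule clopen_Compl[OF Ac])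
  moreover have "- A \<noteq> UNIV" using xA by auto
  ultimately have tfN: "t \<circ> f \<in> N" using step_e S_comp[OF tS fS] by blast
  have "f = t \<circ> (t \<circ> f)" using tt by (simp add: fun_eq_iff)
  thus ?thesis using N_comp[OF tN tfN] by simp
qed

end



theorem theorem2p10:
  fixes S :: "(cantor \<Rightarrow> cantor) set"
  assumes "homeo_group S"
    and "full S"
    and "flexible S"
    and "\<forall>g\<in>S. pair_homeo id g \<in> S \<and> pair_homeo g id \<in> S"
    and "\<forall>f\<in>S. supported_on f I0 \<longrightarrow> (\<exists>g\<in>S. f = pair_homeo g id)"
    and "\<forall>f\<in>S. supported_on f I1 \<longrightarrow> (\<exists>g\<in>S. f = pair_homeo id g)"
    and "\<forall>g\<in>S. \<exists>h\<in>S. h = pair_homeo g h"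
    and "x0 \<in> S"
  shows "simple_grp (homeo_grp S)"
proof -
  interpret hg S using assms by unfold_locales
  have car: "carrier (homeo_grp S) = S" and mul: "\<And>a b. a \<otimes>\<^bsub>homeo_grp S\<^esub> b = a \<circ> b"
    and one: "\<one>\<^bsub>homeo_grp S\<^esub> = id"
    by (simp_all add: homeo_grp_def)
  have G: "group (homeo_grp S)"
  proof (rule groupI)
    show "\<exists>y\<in>carrier (homeo_grp S). y \<otimes>\<^bsub>homeo_grp S\<^esub> x = \<one>\<^bsub>homeo_grp S\<^esub>"
      if "x \<in> carrier (homeo_grp S)" for x
    proof -
      have "x \<in> S" using that car by simp
      hence "hinv x \<in> S" "hinv x \<circ> x = id" using S_inv S_bij bij_is_inj inj_iff by auto
      thus ?thesis using car mul one by auto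
    qed
  qed (auto simp: car mul one S_comp S_id comp_assoc)
  have inveq: "inv\<^bsub>homeo_grp S\<^esub> a = hinv a" if "a \<in> S" for a
  proof -
    have "hinv a \<circ> a = id" using that S_bij bij_is_inj inj_iff by auto
    thus ?thesis using group.inv_equality[OF G] that S_inv car mul one by auto
  qed
  have nt: "carrier (homeo_grp S) \<noteq> {\<one>\<^bsub>homeo_grp S\<^esub>}"
  proof
    assume "carrier (homeo_grp S) = {\<one>\<^bsub>homeo_grp S\<^esub>}"
    hence "x0 = id" using x0S car one by auto
    hence "x0 (ccons False (ccons True (\<lambda>_. False))) = ccons False (ccons True (\<lambda>_. False))" by simp
    thus False by simp
  qed
  have "N = {\<one>\<^bsub>homeo_grp S\<^esub>} \<or> N = carrier (homeo_grp S)" if Nn: "N \<lhd> homeo_grp S" for N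
  proof (cases "N = {id}")
    case True thus ?thesis using one by simp
  next
    case False
    have sg: "subgroup N (homeo_grp S)" using Nn normal_imp_subgroup by blast
    have NS: "N \<subseteq> S" using subgroup.subset[OF sg] car by simp
    have Nid: "id \<in> N" using subgroup.one_closed[OF sg] one by simp
    then obtain n0 where n0: "n0 \<in> N" "n0 \<noteq> id" using False by blast
    have Ncomp: "a \<circ> b \<in> N" if "a \<in> N" "b \<in> N" for a b
      using subgroup.m_closed[OF sg that] mul by simp
    have Ninv: "hinv a \<in> N" if "a \<in> N" for a
      using subgroup.m_inv_closed[OF sg that] inveq that NS by auto
    have Nconj: "g \<circ> a \<circ> hinv g \<in> N" if "g \<in> S" "a \<in> N" for g a
      using normal.inv_op_closed2[OF Nn, of g a] that car mul inveq by simp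
    interpret hgN S N n0
      by unfold_locales (use NS Nid Ncomp Ninv Nconj n0 in auto)
    have "S \<subseteq> N" using step_f by blast
    thus ?thesis using NS car by auto
  qed
  thus ?thesis unfolding simple_grp_def using G nt by blast
qed


end
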